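(* Let $\mathbf P$ be a finite convex collection of bitiles and $f\in L^2(\mathbb R_+)$ with $\operatorname{size}_f(\mathbf P)>0$. Then $\mathbf P=\mathbf P_{hi}\cup\mathbf P_{lo}$ (disjoint union) where (i) $\mathbf P_{hi}$ and $\mathbf P_{lo}$ are both convex; (ii) $\operatorname{size}_f(\mathbf P_{lo})\le\frac12\operatorname{size}_f(\mathbf P)$; (iii) $\mathbf P_{hi}$ is a convex forest whose trees $T\in\mathcal F$ satisfy $$\sum_{T\in\mathcal F}|I_T|\lesssim\operatorname{size}_f(\mathbf P)^{-2}\|f\|_2^2,$$ with an absolute implicit constant.
   Context: Notation. $\mathbb R_+=[0,\infty)$. $\mathcal D_+$ denotes the set of dyadic intervals $[2^jm,2^j(m+1))$ with $j\in\mathbb Z$, $m\in\mathbb Z_{\ge 0}$. The Walsh functions are $w_0=1_{[0,1)}$, $w_{2n}(x)=w_n(2x)+w_n(2x-1)$, $w_{2n+1}(x)=w_n(2x)-w_n(2x-1)$ ($n\ge 0$). A tile is a rectangle $p=I_p\times\omega_p\subset\mathbb R_+^2$ with $I_p,\omega_p\in\mathcal D_+$ and $|I_p||\omega_p|=1$; if $p=[2^jm,2^j(m+1))\times[2^{-j}n,2^{-j}(n+1))$ its Walsh wave packet is $W_p(x)=2^{-j/2}w_n(2^{-j}x-m)$. A bitile is $P=I_P\times\omega_P$ with $I_P,\omega_P\in\mathcal D_+$ and $|I_P||\omega_P|=2$; $\omega_{P_l},\omega_{P_u}$ are the left and right halves of $\omega_P$, and $P_l=I_P\times\omega_{P_l}$,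 $P_u=I_P\times\omega_{P_u}$ are tiles. $\mathbb P_{all}$ is the set of all bitiles. For bitiles, $P\le P'$ means $I_P\subset I_{P'}$ and $\omega_{P'}\subset\omega_P$. A collection $\mathbf P$ of bitiles is convex if $P,P''\in\mathbf P$, $P'\in\mathbb P_{all}$ and $P\le P'\le P''$ imply $P'\in\mathbf P$. For a single bitile, $\Pi_Pf=\langle f,W_{P_u}\rangle W_{P_u}+\langle f,W_{P_l}\rangle W_{P_l}$. A tree $T$ with top data $(I_T,\xi_T)$, where $I_T\in\mathcal D_+$ and $\xi_T\in\mathbb R_+$ is not a dyadic rational, is a collection of bitiles with $I_P\subset I_T$ and $\xi_T\in\omega_P$ for all $P\in T$. A forest is a finite collection of bitiles which is a disjoint union of convex trees $T\in\mathcal F$ (the trees together with their top data are part of the data of the forest); it is a convex forest if moreover the whole collection is convex. Size: for a collection $\mathbf P$ of bitiles, $\operatorname{size}_f(\mathbf P)=\sup_{P\in\mathbf P}\|\Pi_Pf\|_2/|I_P|^{1/2}$. *)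

theory Defs
  imports "HOL-Analysis.Analysis"
begin

type_synonym dyadic = "int \<times> nat"

definition dint :: "dyadic \<Rightarrow> real set" where
  "dint D = (case D of (j, m) \<Rightarrow> {2 powi j * real m ..< 2 powi j * (real m + 1)})"

definition dlen :: "dyadic \<Rightarrow> real" where
  "dlen D = 2 powi (fst D)"

function walsh :: "nat \<Rightarrow> real \<Rightarrow> real" where
  "walsh n x =
     (if n = 0 then indicator {0..<1} x
      else walsh (n div 2) (2 * x)
           + (if even n then 1 else -1) * walsh (n div 2) (2 * x - 1))"
  by auto
termination by (relation "Wellfounded.measure fst") auto

text \<open>A tile [2^j m, 2^j (m+1)) x [2^-j n, 2^-j (n+1)) is encoded by (j, m, n).\<close>
type_synonym tile = "int \<times> nat \<times> nat"

definition wave_packet :: "tile \<Rightarrow> real \<Rightarrow> real" where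
  "wave_packet p x = (case p of (j, m, n) \<Rightarrow>
      2 powr (- real_of_int j / 2) * walsh n (2 powi (- j) * x - real m))"

text \<open>A bitile I_P x omega_P with |I_P| = 2^j, |omega_P| = 2^(1-j), I_P = [2^j m, 2^j(m+1)),
  omega_P = [2^(1-j) n, 2^(1-j)(n+1)) is encoded by (j, m, n).  Every triple is a bitile,
  so the type (int x nat x nat) is P_all.\<close>
type_synonym bitile = "int \<times> nat \<times> nat"

definition I_bt :: "bitile \<Rightarrow> dyadic" where
  "I_bt P = (case P of (j, m, n) \<Rightarrow> (j, m))"

definition omega_bt :: "bitile \<Rightarrow> dyadic" where
  "omega_bt P = (case P of (j, m, n) \<Rightarrow> (1 - j, n))"

definition lower_tile :: "bitile \<Rightarrow> tile" where
  "lower_tile P = (case P of (j, m, n) \<Rightarrow> (j, m, 2 * n))"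

definition upper_tile :: "bitile \<Rightarrow> tile" where
  "upper_tile P = (case P of (j, m, n) \<Rightarrow> (j, m, 2 * n + 1))"

definition bt_le :: "bitile \<Rightarrow> bitile \<Rightarrow> bool" where
  "bt_le P P' \<longleftrightarrow> dint (I_bt P) \<subseteq> dint (I_bt P') \<and> dint (omega_bt P') \<subseteq> dint (omega_bt P)"

definition convex_bt :: "bitile set \<Rightarrow> bool" where
  "convex_bt \<PP> \<longleftrightarrow> (\<forall>P\<in>\<PP>. \<forall>P''\<in>\<PP>. \<forall>P'. bt_le P P' \<and> bt_le P' P'' \<longrightarrow> P' \<in> \<PP>)"

definition L2_Rplus :: "(real \<Rightarrow> complex) \<Rightarrow> bool" where
  "L2_Rplus f \<longleftrightarrow> f \<in> borel_measurable (lebesgue_on {0..})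
     \<and> integrable (lebesgue_on {0..}) (\<lambda>x. (cmod (f x))\<^sup>2)"

definition L2_norm_Rplus :: "(real \<Rightarrow> complex) \<Rightarrow> real" where
  "L2_norm_Rplus f = sqrt (integral\<^sup>L (lebesgue_on {0..}) (\<lambda>x. (cmod (f x))\<^sup>2))"

definition inner_Rplus :: "(real \<Rightarrow> complex) \<Rightarrow> (real \<Rightarrow> real) \<Rightarrow> complex" where
  "inner_Rplus f g = integral\<^sup>L (lebesgue_on {0..}) (\<lambda>x. f x * complex_of_real (g x))"

definition Pi_bt :: "bitile \<Rightarrow> (real \<Rightarrow> complex) \<Rightarrow> real \<Rightarrow> complex" where
  "Pi_bt P f x =
     inner_Rplus f (wave_packet (upper_tile P)) * complex_of_real (wave_packet (upper_tile P) x)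
   + inner_Rplus f (wave_packet (lower_tile P)) * complex_of_real (wave_packet (lower_tile P) x)"

text \<open>size_f(P) = sup over P of ||Pi_P f||_2 / |I_P|^(1/2); the supremum of the empty family
  is taken to be 0 (all terms are nonnegative).\<close>
definition size_f :: "(real \<Rightarrow> complex) \<Rightarrow> bitile set \<Rightarrow> real" where
  "size_f f \<PP> = Sup (insert 0 ((\<lambda>P. L2_norm_Rplus (Pi_bt P f) / sqrt (dlen (I_bt P))) ` \<PP>))"

definition dyadic_rational :: "real \<Rightarrow> bool" where
  "dyadic_rational x \<longleftrightarrow> (\<exists>k::int. \<exists>j::nat. x = real_of_int k / 2 ^ j)"

definition is_tree :: "bitile set \<Rightarrow> dyadic \<Rightarrow> real \<Rightarrow> bool" where
  "is_tree T IT xi \<longleftrightarrow> xi \<ge> 0 \<and> \<not> dyadic_rational xi \<and>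
     (\<forall>P\<in>T. dint (I_bt P) \<subseteq> dint IT \<and> xi \<in> dint (omega_bt P))"

text \<open>A forest: a finite collection of bitiles written as the disjoint union of the convex
  trees in the (finite) family F, each tree carried together with its top data.\<close>
definition is_forest :: "bitile set \<Rightarrow> (bitile set \<times> dyadic \<times> real) set \<Rightarrow> bool" where
  "is_forest \<PP> F \<longleftrightarrow> finite \<PP> \<and> finite F \<and>
     (\<forall>(T, IT, xi)\<in>F. is_tree T IT xi \<and> convex_bt T) \<and>
     (\<forall>A\<in>F. \<forall>B\<in>F. A \<noteq> B \<longrightarrow> fst A \<inter> fst B = {}) \<and>
     \<PP> = (\<Union>A\<in>F. fst A)"

definition is_convex_forest :: "bitile set \<Rightarrow> (bitile set \<times> dyadic \<times> real) set \<Rightarrow> bool" where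
  "is_convex_forest \<PP> F \<longleftrightarrow> is_forest \<PP> F \<and> convex_bt \<PP>"

end

theory Submission
  imports Defs
begin


definition sgn_w :: "nat \<Rightarrow> real" where "sgn_w n = (if even n then 1 else -1)"

lemma walsh_rec: "walsh n x = walsh (n div 2) (2*x) + sgn_w n * walsh (n div 2) (2*x - 1)"
proof (cases "n = 0")
  case True
  then show ?thesis by (simp add: sgn_w_def indicator_def)
next
  case False
  then show ?thesis by (subst walsh.simps) (simp add: sgn_w_def)
qed

declare walsh.simps[simp del]

lemma walsh_out: "x \<notin> {0..<1} \<Longrightarrow> walsh n x = 0"
proof (induction n arbitrary: x rule: less_induct)
  case (less n)
  show ?case
  proof (cases "n = 0")
    case True then show ?thesis using less.prems by (simp add: walsh.simps)
  next
    case False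
    then have "n div 2 < n" by simp
    then have "walsh (n div 2) (2*x) = 0" "walsh (n div 2) (2*x-1) = 0"
      using less.IH less.prems by auto
    then show ?thesis by (simp add: walsh_rec[of n x])
  qed
qed

lemma walsh_in: "x \<in> {0..<1} \<Longrightarrow> \<bar>walsh n x\<bar> = 1"
proof (induction n arbitrary: x rule: less_induct)
  case (less n)
  show ?case
  proof (cases "n = 0")
    case True then show ?thesis using less.prems by (simp add: walsh.simps)
  next
    case False
    then have "n div 2 < n" by simp
    show ?thesis
    proof (cases "x < 1/2")
      case True
      then have "walsh (n div 2) (2*x-1) = 0" by (intro walsh_out) auto
      moreover have "\<bar>walsh (n div 2) (2*x)\<bar> = 1" using less.IH[OF \<open>n div 2 < n\<close>] less.prems True by auto
      ultimately show ?thesis by (simp add: walsh_rec[of n x])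
    next
      case False
      then have "walsh (n div 2) (2*x) = 0" by (intro walsh_out) auto
      moreover have "\<bar>walsh (n div 2) (2*x-1)\<bar> = 1" using less.IH[OF \<open>n div 2 < n\<close>] less.prems False by auto
      ultimately show ?thesis by (simp add: walsh_rec[of n x] sgn_w_def)
    qed
  qed
qed

lemma walsh_bound: "\<bar>walsh n x\<bar> \<le> indicator {0..<1} x"
  using walsh_in[of x n] walsh_out[of x n] by (cases "x \<in> {0..<1}") auto

lemma walsh_sq: "walsh n x * walsh n x = indicator {0..<1} x"
proof (cases "x \<in> {0..<1}")
  case True
  then have "\<bar>walsh n x\<bar> = 1" by (rule walsh_in)
  then have "walsh n x * walsh n x = 1" by (metis abs_mult_self_eq mult.right_neutral)
  then show ?thesis using True by simp
qed (simp add: walsh_out)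

lemma walsh_borel[measurable]: "walsh n \<in> borel_measurable borel"
proof (induction n rule: less_induct)
  case (less n)
  show ?case
  proof (cases "n = 0")
    case True then show ?thesis by (simp add: walsh.simps[abs_def])
  next
    case False
    then have "n div 2 < n" by simp
    note IH = less.IH[OF this]
    have e: "walsh n = (\<lambda>x. walsh (n div 2) (2*x) + sgn_w n * walsh (n div 2) (2*x - 1))"
      using walsh_rec by blast
    show ?thesis unfolding e
      by (intro borel_measurable_add borel_measurable_times measurable_compose[OF _ IH]) auto
  qed
qed

lemma walsh_lower: "0 \<le> z \<Longrightarrow> z < 1/2 \<Longrightarrow> walsh n z = walsh (n div 2) (2*z)"
  using walsh_rec[of n z] walsh_out[of "2*z-1" "n div 2"] by simp

lemma walsh_upper: "1/2 \<le> z \<Longrightarrow> walsh n z = sgn_w n * walsh (n div 2) (2*z - 1)"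
  using walsh_rec[of n z] walsh_out[of "2*z" "n div 2"] by simp

lemma walsh_sub:
  "k < 2^s \<Longrightarrow> \<exists>e. \<bar>e\<bar> = 1 \<and> (\<forall>y. real k / 2^s \<le> y \<and> y < (real k + 1) / 2^s \<longrightarrow>
     walsh n y = e * walsh (n div 2^s) (2^s * y - real k))"
proof (induction s arbitrary: k)
  case 0
  then show ?case by (intro exI[of _ 1]) auto
next
  case (Suc s)
  define k1 where "k1 = k div 2"
  define k0 where "k0 = k mod 2"
  have kk: "k = 2*k1 + k0" unfolding k1_def k0_def by simp
  have "k1 < 2^s" using Suc.prems unfolding k1_def by (simp add: less_mult_imp_div_less)
  from Suc.IH[OF this] obtain e where e: "\<bar>e\<bar> = 1"
    and he: "\<And>y. real k1 / 2^s \<le> y \<Longrightarrow> y < (real k1 + 1) / 2^s \<Longrightarrow>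
     walsh n y = e * walsh (n div 2^s) (2^s * y - real k1)" by blast
  define e' where "e' = e * (if k0 = 0 then 1 else sgn_w (n div 2^s))"
  show ?case
  proof (intro exI[of _ e'] conjI allI impI)
    show "\<bar>e'\<bar> = 1" using e by (auto simp: e'_def sgn_w_def abs_mult)
    fix y assume y: "real k / 2 ^ Suc s \<le> y \<and> y < (real k + 1) / 2 ^ Suc s"
    have p: "(0::real) < 2^s" by simp
    have y1: "real k \<le> 2^Suc s * y" "2^Suc s * y < real k + 1"
      using y by (simp_all add: field_simps)
    have "real k1 / 2^s \<le> y" "y < (real k1 + 1) / 2^s"
      using y1 kk unfolding k0_def by (auto simp: field_simps)
    note h = he[OF this]
    define z where "z = 2^s * y - real k1"
    have zz: "2 * z - real k0 = 2^Suc s * y - real k" using kk by (simp add: z_def algebra_simps)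
    have "n div 2^s div 2 = n div 2^Suc s" by (simp only: power_Suc2 div_mult2_eq)
    have hz: "walsh n y = e * walsh (n div 2^s) z" using h by (simp add: z_def)
    have nd: "n div 2 ^ Suc s = n div 2^s div 2" using \<open>n div 2^s div 2 = _\<close> by simp
    show "walsh n y = e' * walsh (n div 2 ^ Suc s) (2 ^ Suc s * y - real k)"
    proof (cases "k0 = 0")
      case True
      then have "0 \<le> z" "z < 1/2" using y1 kk by (auto simp: z_def field_simps)
      from walsh_lower[OF this, of "n div 2^s"] have "walsh (n div 2^s) z = walsh (n div 2 ^ Suc s) (2*z - real k0)"
        using True nd by simp
      then show ?thesis using hz zz True by (simp add: e'_def)
    next
      case False
      then have "k0 = 1" unfolding k0_def by simp
      then have "1/2 \<le> z" using y1 kk by (auto simp: z_def field_simps)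
      from walsh_upper[OF this, of "n div 2^s"] have "walsh (n div 2^s) z = sgn_w (n div 2^s) * walsh (n div 2 ^ Suc s) (2*z - real k0)"
        using \<open>k0 = 1\<close> nd by simp
      then show ?thesis using hz zz \<open>k0 = 1\<close> by (simp add: e'_def)
    qed
  qed
qed




lemma int_ind01: "integrable lborel (indicator {0..<1::real} :: real \<Rightarrow> real)"
  by (intro integrable_real_indicator) auto

lemma walsh_prod_integrable: "integrable lborel (\<lambda>x. walsh a x * walsh b x)"
proof (rule Bochner_Integration.integrable_bound[OF int_ind01])
  show "(\<lambda>x. walsh a x * walsh b x) \<in> borel_measurable lborel" by simp
  show "AE x in lborel. norm (walsh a x * walsh b x) \<le> norm (indicator {0..<1::real} x :: real)"
  proof (intro AE_I2)
    fix x :: real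
    have "\<bar>walsh a x\<bar> * \<bar>walsh b x\<bar> \<le> indicator {0..<1} x * indicator {0..<1} x"
      by (intro mult_mono walsh_bound) auto
    then show "norm (walsh a x * walsh b x) \<le> norm (indicator {0..<1::real} x :: real)"
      by (auto simp: abs_mult indicator_def split: if_splits)
  qed
qed

lemma affine2: "integral\<^sup>L lborel (g::real\<Rightarrow>real) = 2 * integral\<^sup>L lborel (\<lambda>x. g (t + 2*x))"
  using lborel_integral_real_affine[of 2 g t] by simp

lemma walsh_orth_aux: "a \<noteq> b \<Longrightarrow> integral\<^sup>L lborel (\<lambda>x. walsh a x * walsh b x) = 0"
proof (induction "a + b" arbitrary: a b rule: less_induct)
  case less
  define a' b' where "a' = a div 2" and "b' = b div 2"
  have pt: "walsh a x * walsh b x = walsh a' (2*x) * walsh b' (2*x)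
     + (sgn_w a * sgn_w b) * (walsh a' (-1 + 2*x) * walsh b' (-1 + 2*x))" for x
  proof -
    have c1: "walsh a' (2*x) * walsh b' (2*x - 1) = 0" "walsh a' (2*x - 1) * walsh b' (2*x) = 0"
    proof -
      have "2*x \<notin> {0..<1} \<or> 2*x - 1 \<notin> {0..<1}" by auto
      then show "walsh a' (2*x) * walsh b' (2*x - 1) = 0" "walsh a' (2*x - 1) * walsh b' (2*x) = 0"
        by (metis mult_zero_left mult_zero_right walsh_out)+
    qed
    have "walsh a x * walsh b x = walsh a' (2*x) * walsh b' (2*x) + sgn_w a * sgn_w b * (walsh a' (2*x-1) * walsh b' (2*x-1))
      + sgn_w b * (walsh a' (2*x) * walsh b' (2*x - 1)) + sgn_w a * (walsh a' (2*x - 1) * walsh b' (2*x))"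
      unfolding walsh_rec[of a x] walsh_rec[of b x] a'_def[symmetric] b'_def[symmetric]
      by (simp add: algebra_simps)
    then show ?thesis using c1 by simp
  qed
  define J where "J = (\<lambda>a b. integral\<^sup>L lborel (\<lambda>x. walsh a x * walsh b x))"
  have "J a b = integral\<^sup>L lborel (\<lambda>x. walsh a' (2*x) * walsh b' (2*x))
     + (sgn_w a * sgn_w b) * integral\<^sup>L lborel (\<lambda>x. walsh a' (-1 + 2*x) * walsh b' (-1 + 2*x))"
  proof -
    have i1: "integrable lborel (\<lambda>x. walsh a' (2*x) * walsh b' (2*x))"
      using lborel_integrable_real_affine[OF walsh_prod_integrable[of a' b'], of 2 0] by simp
    have i2: "integrable lborel (\<lambda>x. (sgn_w a * sgn_w b) * (walsh a' (-1 + 2*x) * walsh b' (-1 + 2*x)))"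
      using lborel_integrable_real_affine[OF walsh_prod_integrable[of a' b'], of 2 "-1"] by simp
    show ?thesis unfolding J_def pt Bochner_Integration.integral_add[OF i1 i2] by simp
  qed
  also have "\<dots> = J a' b' / 2 + (sgn_w a * sgn_w b) * (J a' b' / 2)"
    using affine2[of "\<lambda>x. walsh a' x * walsh b' x" 0] affine2[of "\<lambda>x. walsh a' x * walsh b' x" "-1"]
    unfolding J_def by simp
  also have "\<dots> = 0"
  proof (cases "a' = b'")
    case True
    then have "odd a \<noteq> odd b" using less.prems unfolding a'_def b'_def
      by (metis dvd_mult_div_cancel odd_two_times_div_two_succ)
    then have "sgn_w a * sgn_w b = -1" by (auto simp: sgn_w_def)
    then show ?thesis by simp
  next
    case False
    have "a' + b' < a + b" using less.prems unfolding a'_def b'_def by linarith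
    from less.hyps[OF this False] show ?thesis unfolding J_def by simp
  qed
  finally show ?case unfolding J_def .
qed

lemma walsh_orth: "integral\<^sup>L lborel (\<lambda>x. walsh a x * walsh b x) = (if a = b then 1 else 0)"
proof (cases "a = b")
  case True
  have "integral\<^sup>L lborel (\<lambda>x. walsh a x * walsh a x) = integral\<^sup>L lborel (indicator {0..<1::real} :: real \<Rightarrow> real)"
    by (simp add: walsh_sq)
  also have "\<dots> = 1" by simp
  finally show ?thesis using True by simp
qed (simp add: walsh_orth_aux)




definition cj :: "int \<Rightarrow> real" where "cj j = 2 powr (- real_of_int j / 2)"

lemma wp_eq: "wave_packet (j, m, n) x = cj j * walsh n (2 powi (- j) * x - real m)"
  by (simp add: wave_packet_def cj_def)

lemma cj_pos: "cj j > 0" by (simp add: cj_def)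

lemma cj_sq: "cj j * cj j = 2 powi (- j)"
proof -
  have "cj j * cj j = 2 powr (- real_of_int j)" unfolding cj_def by (simp add: powr_add[symmetric])
  also have "\<dots> = 2 powr (real_of_int (- j))" by simp
  also have "\<dots> = 2 powi (- j)" by (rule powr_real_of_int') auto
  finally show ?thesis .
qed

lemma wp_borel[measurable]: "wave_packet p \<in> borel_measurable borel"
proof -
  obtain j m n where p: "p = (j, m, n)" by (cases p) auto
  have "wave_packet p = (\<lambda>x. cj j * walsh n (2 powi (- j) * x - real m))"
    using wp_eq p by auto
  then show ?thesis by simp
qed

lemma wp_support: "wave_packet (j, m, n) x \<noteq> 0 \<Longrightarrow> 0 \<le> 2 powi (- j) * x - real m \<and> 2 powi (- j) * x - real m < 1"
  using walsh_out[of "2 powi (- j) * x - real m" n] by (auto simp: wp_eq)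

lemma wp_bound: "\<bar>wave_packet (j, m, n) x\<bar> \<le> cj j * indicator {0..<1} (2 powi (- j) * x - real m)"
  using walsh_bound[of n "2 powi (- j) * x - real m"] cj_pos[of j] by (simp add: wp_eq abs_mult)

lemma ind_affine_integrable:
  "integrable lborel (\<lambda>x. indicator {0..<1::real} (2 powi (- j) * x - real m) :: real)"
proof -
  have "integrable lborel (\<lambda>x. indicator {0..<1::real} (- real m + 2 powi (- j) * x) :: real)"
    by (rule lborel_integrable_real_affine[OF int_ind01]) simp
  then show ?thesis by simp
qed

lemma wp_prod_integrable: "integrable lborel (\<lambda>x. wave_packet p x * wave_packet q x)"
proof -
  obtain j m n where p: "p = (j, m, n)" by (cases p) auto
  obtain j' m' n' where q: "q = (j', m', n')" by (cases q) auto
  show ?thesis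
  proof (rule Bochner_Integration.integrable_bound[OF integrable_mult_right[OF ind_affine_integrable[of j m]]])
    show "(\<lambda>x. wave_packet p x * wave_packet q x) \<in> borel_measurable lborel" by simp
    show "AE x in lborel. norm (wave_packet p x * wave_packet q x) \<le> norm (cj j * cj j' * indicator {0..<1::real} (2 powi (- j) * x - real m) :: real)"
    proof (intro AE_I2)
      fix x
      have a: "\<bar>wave_packet p x\<bar> \<le> cj j * indicator {0..<1} (2 powi (- j) * x - real m)" using wp_bound p by simp
      have "cj j' * indicator {0..<1} (2 powi (- j') * x - real m') \<le> cj j'" using cj_pos[of j']
        by (auto simp: indicator_def)
      then have b: "\<bar>wave_packet q x\<bar> \<le> cj j'" using wp_bound[of j' m' n' x] q by simp
      have "\<bar>wave_packet p x\<bar> * \<bar>wave_packet q x\<bar> \<le> (cj j * indicator {0..<1} (2 powi (- j) * x - real m)) * cj j'"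
        by (rule mult_mono[OF a b]) (auto intro!: mult_nonneg_nonneg less_imp_le[OF cj_pos])
      then show "norm (wave_packet p x * wave_packet q x) \<le> norm (cj j * cj j' * indicator {0..<1::real} (2 powi (- j) * x - real m) :: real)"
        using cj_pos[of j] cj_pos[of j'] by (simp add: abs_mult algebra_simps)
    qed
  qed
qed

lemma wp_same_orth: "integral\<^sup>L lborel (\<lambda>x. wave_packet (j, m, a) x * wave_packet (j, m, b) x) = (if a = b then 1 else 0)"
proof -
  define c :: real where "c = 2 powi j"
  have c0: "c > 0" unfolding c_def by simp
  have ci: "2 powi (- j) * c = 1" unfolding c_def by (simp add: power_int_minus)
  have "integral\<^sup>L lborel (\<lambda>x. wave_packet (j, m, a) x * wave_packet (j, m, b) x)
     = \<bar>c\<bar> * integral\<^sup>L lborel (\<lambda>y. wave_packet (j, m, a) (c * real m + c * y) * wave_packet (j, m, b) (c * real m + c * y))"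
    using lborel_integral_real_affine[of c "\<lambda>x. wave_packet (j, m, a) x * wave_packet (j, m, b) x" "c * real m"] c0 by simp
  also have "(\<lambda>y. wave_packet (j, m, a) (c * real m + c * y) * wave_packet (j, m, b) (c * real m + c * y))
      = (\<lambda>y. 2 powi (- j) * (walsh a y * walsh b y))"
  proof
    fix y
    have e: "2 powi (- j) * (c * real m + c * y) - real m = y"
      proof -
        have "2 powi (- j) * (c * real m + c * y) = (2 powi (- j) * c) * (real m + y)" by (simp add: algebra_simps)
        then show ?thesis using ci by simp
      qed
    show "wave_packet (j, m, a) (c * real m + c * y) * wave_packet (j, m, b) (c * real m + c * y) = 2 powi (- j) * (walsh a y * walsh b y)"
      unfolding wp_eq e using cj_sq[of j] by (simp add: algebra_simps)
  qed
  also have "\<bar>c\<bar> * integral\<^sup>L lborel (\<lambda>y. 2 powi (- j) * (walsh a y * walsh b y)) = (if a = b then 1 else 0)"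
    using ci c0 by (simp add: walsh_orth mult.commute)
  finally show ?thesis .
qed

lemma wp_diffm: "m \<noteq> m' \<Longrightarrow> wave_packet (j, m, a) x * wave_packet (j, m', b) x = 0"
proof (rule ccontr)
  assume "m \<noteq> m'" "wave_packet (j, m, a) x * wave_packet (j, m', b) x \<noteq> 0"
  then have "0 \<le> 2 powi (- j) * x - real m \<and> 2 powi (- j) * x - real m < 1"
     "0 \<le> 2 powi (- j) * x - real m' \<and> 2 powi (- j) * x - real m' < 1"
    using wp_support by auto
  then have "real m < real m' + 1" "real m' < real m + 1" by linarith+
  then show False using \<open>m \<noteq> m'\<close> by linarith
qed




lemma pow_rel: fixes x :: real assumes "j' = j + int s" shows "2 powi (- j') * x = (2 powi (- j) * x) / 2^s"
proof -
  have "(2::real) powi (- j) = 2 powi (- j' + int s)" using assms by simp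
  also have "\<dots> = 2 powi (- j') * 2 powi (int s)" by (rule power_int_add) simp
  also have "\<dots> = 2 powi (- j') * 2 ^ s" by simp
  finally show ?thesis by simp
qed

lemma wp_orth_gen:
  assumes jj: "j \<le> j'" and sdef: "s = nat (j' - j)" and cond: "m div 2^s = m' \<longrightarrow> b div 2^s \<noteq> a"
  shows "integral\<^sup>L lborel (\<lambda>x. wave_packet (j, m, a) x * wave_packet (j', m', b) x) = 0"
proof -
  have j': "j' = j + int s" using jj sdef by simp
  have s0: "(0::real) < 2^s" by simp
  show ?thesis
  proof (cases "m div 2^s = m'")
    case False
    have "wave_packet (j, m, a) x * wave_packet (j', m', b) x = 0" for x
    proof (rule ccontr)
      assume nz: "wave_packet (j, m, a) x * wave_packet (j', m', b) x \<noteq> 0"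
      define y where "y = 2 powi (- j) * x - real m"
      have y: "0 \<le> y" "y < 1" using wp_support[of j m a x] nz by (auto simp: y_def)
      have z: "0 \<le> 2 powi (- j') * x - real m'" "2 powi (- j') * x - real m' < 1"
        using wp_support[of j' m' b x] nz by auto
      have zz: "2 powi (- j') * x = (y + real m) / 2^s" using pow_rel[OF j', of x] by (simp add: y_def)
      define w where "w = 2 powi (- j') * x"
      have w: "real m' \<le> w" "w < real m' + 1" using z by (simp_all add: w_def)
      have ym: "y + real m = w * 2^s" using zz s0 by (simp add: w_def)
      have l: "real m' * 2^s \<le> y + real m" "y + real m < (real m' + 1) * 2^s"
        unfolding ym using w s0 by (simp_all add: mult_right_mono)
      have "real (m' * 2^s) < real (m + 1)" using l y by simp
      then have "m' * 2^s < m + 1" by (simp only: of_nat_less_iff)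
      then have l1: "2^s * m' \<le> m" by (simp add: mult.commute)
      have "real m < real (2^s * Suc m')" using l y by (simp add: algebra_simps)
      then have l2: "m < 2^s * Suc m'" by (simp only: of_nat_less_iff)
      have "m div 2^s = m'" by (rule div_nat_eqI[OF l1 l2])
      then show False using False by simp
    qed
    then have "(\<lambda>x. wave_packet (j, m, a) x * wave_packet (j', m', b) x) = (\<lambda>x. 0)" by (rule ext)
    then show ?thesis by simp
  next
    case True
    define b'' where "b'' = b div 2^s"
    have ab: "a \<noteq> b''" using cond True unfolding b''_def by auto
    define k where "k = m mod 2^s"
    have k: "k < 2^s" unfolding k_def by simp
    have mk: "m = m' * 2^s + k" unfolding k_def using True by (metis div_mult_mod_eq)
    obtain e where e: "\<bar>e\<bar> = 1" and he: "\<And>y. real k / 2^s \<le> y \<Longrightarrow> y < (real k + 1) / 2^s \<Longrightarrow>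
       walsh b y = e * walsh (b div 2^s) (2^s * y - real k)"
      using walsh_sub[OF k, of b] by blast
    define K where "K = e * cj j' / cj j"
    have pt: "wave_packet (j, m, a) x * wave_packet (j', m', b) x = K * (wave_packet (j, m, a) x * wave_packet (j, m, b'') x)" for x
    proof (cases "wave_packet (j, m, a) x = 0")
      case True then show ?thesis by simp
    next
      case False
      define y where "y = 2 powi (- j) * x - real m"
      have y: "0 \<le> y" "y < 1" using wp_support[of j m a x] False by (auto simp: y_def)
      define z where "z = 2 powi (- j') * x - real m'"
      have "2 powi (- j') * x = (y + real m) / 2^s" using pow_rel[OF j', of x] by (simp add: y_def)
      then have zz: "z = (y + real k) / 2^s" using mk s0 by (simp add: z_def field_simps)
      have "real k / 2^s \<le> z" "z < (real k + 1) / 2^s" using zz y s0 by (simp_all add: divide_right_mono divide_strict_right_mono)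
      from he[OF this] have "walsh b z = e * walsh b'' y" using zz s0 by (simp add: b''_def)
      then have "wave_packet (j', m', b) x = K * wave_packet (j, m, b'') x"
        using cj_pos[of j] by (simp add: wp_eq K_def z_def[symmetric] y_def[symmetric])
      then show ?thesis by simp
    qed
    have "integral\<^sup>L lborel (\<lambda>x. wave_packet (j, m, a) x * wave_packet (j', m', b) x)
        = K * integral\<^sup>L lborel (\<lambda>x. wave_packet (j, m, a) x * wave_packet (j, m, b'') x)"
      unfolding pt by simp
    also have "\<dots> = 0" using wp_same_orth[of j m a b''] ab by simp
    finally show ?thesis .
  qed
qed




abbreviation "MP \<equiv> lebesgue_on {0::real..}"

lemma sets_Rplus: "{0::real..} \<inter> space lebesgue \<in> sets lebesgue"
proof -
  have "{0::real..} \<in> sets borel" by simp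
  then have "{0::real..} \<in> sets lborel" by simp
  then show ?thesis by simp
qed

lemma lborel_to_M:
  fixes h :: "real \<Rightarrow> real"
  assumes hm: "h \<in> borel_measurable borel" and hi: "integrable lborel h" and h0: "\<And>x. x < 0 \<Longrightarrow> h x = 0"
  shows "integrable MP h" "integral\<^sup>L MP h = integral\<^sup>L lborel h"
proof -
  have hm': "h \<in> borel_measurable lborel" using hm by simp
  have eq: "(\<lambda>x. indicator {0..} x *\<^sub>R h x) = h"
    using h0 by (auto simp: indicator_def fun_eq_iff not_le)
  have "integrable lebesgue h" using integrable_completion[OF hm'] hi by simp
  then show "integrable MP h"
    unfolding integrable_restrict_space[OF sets_Rplus] eq .
  show "integral\<^sup>L MP h = integral\<^sup>L lborel h"
    unfolding integral_restrict_space[OF sets_Rplus] eq using integral_completion[OF hm'] by simp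
qed

lemma wp_neg: "x < 0 \<Longrightarrow> wave_packet p x = 0"
proof (rule ccontr)
  obtain j m n where p: "p = (j, m, n)" by (cases p) auto
  assume "x < 0" "wave_packet p x \<noteq> 0"
  then have "0 \<le> 2 powi (- j) * x - real m" using wp_support p by blast
  moreover have "2 powi (- j) * x < 0" using \<open>x < 0\<close> by (simp add: mult_pos_neg)
  ultimately show False by simp
qed

lemma wp_M_int: "integrable MP (\<lambda>x. wave_packet p x * wave_packet q x)"
  "integral\<^sup>L MP (\<lambda>x. wave_packet p x * wave_packet q x) = integral\<^sup>L lborel (\<lambda>x. wave_packet p x * wave_packet q x)"
  using lborel_to_M[of "\<lambda>x. wave_packet p x * wave_packet q x", OF _ wp_prod_integrable] wp_neg by auto

lemma wp_M_meas[measurable]: "wave_packet p \<in> borel_measurable MP"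
proof -
  have "wave_packet p \<in> borel_measurable lborel" by simp
  then have "wave_packet p \<in> borel_measurable lebesgue" by (rule measurable_completion)
  then show ?thesis by (rule measurable_restrict_space1)
qed

lemma bessel:
  fixes M :: "'a measure" and e :: "'i \<Rightarrow> 'a \<Rightarrow> real" and g :: "'a \<Rightarrow> real"
  assumes K: "finite K"
    and ee: "\<And>i k. i \<in> K \<Longrightarrow> k \<in> K \<Longrightarrow> integrable M (\<lambda>x. e i x * e k x)"
    and eo: "\<And>i k. i \<in> K \<Longrightarrow> k \<in> K \<Longrightarrow> integral\<^sup>L M (\<lambda>x. e i x * e k x) = (if i = k then 1 else 0)"
    and ge: "\<And>i. i \<in> K \<Longrightarrow> integrable M (\<lambda>x. g x * e i x)"
    and gg: "integrable M (\<lambda>x. g x * g x)"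
  shows "(\<Sum>i\<in>K. (integral\<^sup>L M (\<lambda>x. g x * e i x))\<^sup>2) \<le> integral\<^sup>L M (\<lambda>x. g x * g x)"
proof -
  define c where "c i = integral\<^sup>L M (\<lambda>x. g x * e i x)" for i
  define h where "h x = g x - (\<Sum>i\<in>K. c i * e i x)" for x
  have hx: "h x * h x = g x * g x - 2 * (\<Sum>i\<in>K. c i * (g x * e i x))
      + (\<Sum>i\<in>K. \<Sum>k\<in>K. (c i * c k) * (e i x * e k x))" for x
  proof -
    have "(\<Sum>i\<in>K. c i * e i x) * (\<Sum>i\<in>K. c i * e i x) = (\<Sum>i\<in>K. \<Sum>k\<in>K. (c i * c k) * (e i x * e k x))"
      by (simp add: sum_product algebra_simps)
    moreover have "g x * (\<Sum>i\<in>K. c i * e i x) = (\<Sum>i\<in>K. c i * (g x * e i x))"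
      by (simp add: sum_distrib_left algebra_simps)
    ultimately show ?thesis unfolding h_def by (simp add: algebra_simps)
  qed
  have i1: "integrable M (\<lambda>x. 2 * (\<Sum>i\<in>K. c i * (g x * e i x)))"
    using ge by (intro integrable_mult_right Bochner_Integration.integrable_sum) auto
  have i2: "integrable M (\<lambda>x. \<Sum>i\<in>K. \<Sum>k\<in>K. (c i * c k) * (e i x * e k x))"
    using ee by (intro Bochner_Integration.integrable_sum integrable_mult_right) auto
  have I1: "integral\<^sup>L M (\<lambda>x. 2 * (\<Sum>i\<in>K. c i * (g x * e i x))) = 2 * (\<Sum>i\<in>K. (c i)\<^sup>2)"
    using ge by (simp add: Bochner_Integration.integral_sum c_def power2_eq_square)
  have I2: "integral\<^sup>L M (\<lambda>x. \<Sum>i\<in>K. \<Sum>k\<in>K. (c i * c k) * (e i x * e k x)) = (\<Sum>i\<in>K. (c i)\<^sup>2)"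
  proof -
    have "integral\<^sup>L M (\<lambda>x. \<Sum>i\<in>K. \<Sum>k\<in>K. (c i * c k) * (e i x * e k x))
        = (\<Sum>i\<in>K. \<Sum>k\<in>K. (c i * c k) * (if i = k then 1 else 0))"
      using ee eo by (simp add: Bochner_Integration.integral_sum integrable_mult_right Bochner_Integration.integrable_sum)
    also have "\<dots> = (\<Sum>i\<in>K. (c i)\<^sup>2)" using K by (simp add: power2_eq_square if_distrib sum.delta cong: if_cong)
    finally show ?thesis .
  qed
  have "0 \<le> integral\<^sup>L M (\<lambda>x. h x * h x)" by (simp add: Bochner_Integration.integral_nonneg)
  also have "\<dots> = integral\<^sup>L M (\<lambda>x. g x * g x) - 2 * (\<Sum>i\<in>K. (c i)\<^sup>2) + (\<Sum>i\<in>K. (c i)\<^sup>2)"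
    unfolding hx using gg i1 i2 I1 I2 by simp
  finally show ?thesis unfolding c_def by simp
qed




lemma sq_half: "\<bar>u * v\<bar> \<le> u * u + v * v" for u v :: real
proof -
  have "0 \<le> (\<bar>u\<bar> - \<bar>v\<bar>)^2" by simp
  then have "2 * \<bar>u\<bar> * \<bar>v\<bar> \<le> u * u + v * v" by (simp add: power2_eq_square algebra_simps abs_mult_self_eq)
  moreover have "0 \<le> \<bar>u\<bar> * \<bar>v\<bar>" by simp
  ultimately show ?thesis unfolding abs_mult by linarith
qed

lemma cm2: "(cmod z)\<^sup>2 = Re z * Re z + Im z * Im z"
  using cmod_power2[of z] by (simp add: power2_eq_square)

lemma int_prod_bound:
  fixes g w :: "real \<Rightarrow> real"
  assumes "g \<in> borel_measurable MP" "w \<in> borel_measurable MP"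
    "integrable MP (\<lambda>x. g x * g x)" "integrable MP (\<lambda>x. w x * w x)"
  shows "integrable MP (\<lambda>x. g x * w x)"
proof (rule Bochner_Integration.integrable_bound[of _ "\<lambda>x. g x * g x + w x * w x"])
  show "integrable MP (\<lambda>x. g x * g x + w x * w x)" using assms by simp
  show "(\<lambda>x. g x * w x) \<in> borel_measurable MP" using assms by simp
  show "AE x in MP. norm (g x * w x) \<le> norm (g x * g x + w x * w x)"
    using sq_half by (intro AE_I2) (simp add: abs_mult_self_eq)
qed

context
  fixes f :: "real \<Rightarrow> complex"
  assumes fL2: "L2_Rplus f"
begin

lemma f_meas[measurable]: "f \<in> borel_measurable MP" using fL2 unfolding L2_Rplus_def by simp
lemma f_sq: "integrable MP (\<lambda>x. (cmod (f x))\<^sup>2)" using fL2 unfolding L2_Rplus_def by simp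

lemma Re_sq: "integrable MP (\<lambda>x. Re (f x) * Re (f x))"
proof (rule Bochner_Integration.integrable_bound[OF f_sq])
  show "(\<lambda>x. Re (f x) * Re (f x)) \<in> borel_measurable MP" by simp
  show "AE x in MP. norm (Re (f x) * Re (f x)) \<le> norm ((cmod (f x))\<^sup>2)"
    by (intro AE_I2) (simp add: cm2)
qed

lemma Im_sq: "integrable MP (\<lambda>x. Im (f x) * Im (f x))"
proof (rule Bochner_Integration.integrable_bound[OF f_sq])
  show "(\<lambda>x. Im (f x) * Im (f x)) \<in> borel_measurable MP" by simp
  show "AE x in MP. norm (Im (f x) * Im (f x)) \<le> norm ((cmod (f x))\<^sup>2)"
    by (intro AE_I2) (simp add: cm2)
qed

lemma W_sq: "integrable MP (\<lambda>x. wave_packet p x * wave_packet p x)" using wp_M_int by simp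

lemma fW_int: "integrable MP (\<lambda>x. f x * complex_of_real (wave_packet p x))"
proof (rule Bochner_Integration.integrable_bound[of _ "\<lambda>x. (cmod (f x))\<^sup>2 + wave_packet p x * wave_packet p x"])
  show "integrable MP (\<lambda>x. (cmod (f x))\<^sup>2 + wave_packet p x * wave_packet p x)" using f_sq W_sq by simp
  show "(\<lambda>x. f x * complex_of_real (wave_packet p x)) \<in> borel_measurable MP" by simp
  show "AE x in MP. norm (f x * complex_of_real (wave_packet p x)) \<le> norm ((cmod (f x))\<^sup>2 + wave_packet p x * wave_packet p x)"
  proof (intro AE_I2)
    fix x
    have "\<bar>cmod (f x) * wave_packet p x\<bar> \<le> cmod (f x) * cmod (f x) + wave_packet p x * wave_packet p x" by (rule sq_half)
    then show "norm (f x * complex_of_real (wave_packet p x)) \<le> norm ((cmod (f x))\<^sup>2 + wave_packet p x * wave_packet p x)"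
      by (simp add: norm_mult power2_eq_square abs_mult)
  qed
qed

lemma Re_inner: "Re (inner_Rplus f (wave_packet p)) = integral\<^sup>L MP (\<lambda>x. Re (f x) * wave_packet p x)"
  unfolding inner_Rplus_def using integral_bounded_linear[OF bounded_linear_Re fW_int[of p]] by simp

lemma Im_inner: "Im (inner_Rplus f (wave_packet p)) = integral\<^sup>L MP (\<lambda>x. Im (f x) * wave_packet p x)"
  unfolding inner_Rplus_def using integral_bounded_linear[OF bounded_linear_Im fW_int[of p]] by simp

lemma L2_sq: "(L2_norm_Rplus f)\<^sup>2 = integral\<^sup>L MP (\<lambda>x. Re (f x) * Re (f x)) + integral\<^sup>L MP (\<lambda>x. Im (f x) * Im (f x))"
proof -
  have "(L2_norm_Rplus f)\<^sup>2 = integral\<^sup>L MP (\<lambda>x. (cmod (f x))\<^sup>2)"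
    unfolding L2_norm_Rplus_def by (simp add: Bochner_Integration.integral_nonneg)
  also have "\<dots> = integral\<^sup>L MP (\<lambda>x. Re (f x) * Re (f x) + Im (f x) * Im (f x))"
    by (simp only: cm2)
  also have "\<dots> = integral\<^sup>L MP (\<lambda>x. Re (f x) * Re (f x)) + integral\<^sup>L MP (\<lambda>x. Im (f x) * Im (f x))"
    using Re_sq Im_sq by simp
  finally show ?thesis .
qed

lemma bessel_f:
  assumes K: "finite K"
    and orth: "\<And>p q. p \<in> K \<Longrightarrow> q \<in> K \<Longrightarrow> integral\<^sup>L lborel (\<lambda>x. wave_packet p x * wave_packet q x) = (if p = q then 1 else 0)"
  shows "(\<Sum>p\<in>K. (cmod (inner_Rplus f (wave_packet p)))\<^sup>2) \<le> (L2_norm_Rplus f)\<^sup>2"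
proof -
  have ee: "\<And>i k. integrable MP (\<lambda>x. wave_packet i x * wave_packet k x)" using wp_M_int by simp
  have eo: "\<And>i k. i \<in> K \<Longrightarrow> k \<in> K \<Longrightarrow> integral\<^sup>L MP (\<lambda>x. wave_packet i x * wave_packet k x) = (if i = k then 1 else 0)"
    using wp_M_int orth by simp
  have geR: "\<And>i. integrable MP (\<lambda>x. Re (f x) * wave_packet i x)"
    by (rule int_prod_bound) (auto simp: Re_sq W_sq)
  have geI: "\<And>i. integrable MP (\<lambda>x. Im (f x) * wave_packet i x)"
    by (rule int_prod_bound) (auto simp: Im_sq W_sq)
  have bR: "(\<Sum>i\<in>K. (integral\<^sup>L MP (\<lambda>x. Re (f x) * wave_packet i x))\<^sup>2) \<le> integral\<^sup>L MP (\<lambda>x. Re (f x) * Re (f x))"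
    by (rule bessel[OF K ee eo geR Re_sq])
  have bI: "(\<Sum>i\<in>K. (integral\<^sup>L MP (\<lambda>x. Im (f x) * wave_packet i x))\<^sup>2) \<le> integral\<^sup>L MP (\<lambda>x. Im (f x) * Im (f x))"
    by (rule bessel[OF K ee eo geI Im_sq])
  have "(\<Sum>p\<in>K. (cmod (inner_Rplus f (wave_packet p)))\<^sup>2)
      = (\<Sum>i\<in>K. (integral\<^sup>L MP (\<lambda>x. Re (f x) * wave_packet i x))\<^sup>2) + (\<Sum>i\<in>K. (integral\<^sup>L MP (\<lambda>x. Im (f x) * wave_packet i x))\<^sup>2)"
    by (simp add: cmod_power2 Re_inner Im_inner sum.distrib)
  then show ?thesis using bR bI L2_sq by simp
qed

end




lemma W_norm1: "integral\<^sup>L MP (\<lambda>x. wave_packet p x * wave_packet p x) = 1"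
proof -
  obtain j m n where p: "p = (j, m, n)" by (cases p) auto
  show ?thesis using wp_M_int(2)[of p p] wp_same_orth[of j m n n] p by simp
qed

lemma sq2: "(A + B)\<^sup>2 \<le> 2 * A\<^sup>2 + 2 * B\<^sup>2" for A B :: real
proof -
  have "0 \<le> (A - B)\<^sup>2" by simp
  then show ?thesis by (simp add: power2_eq_square algebra_simps)
qed

lemma Pi_bound:
  "(L2_norm_Rplus (Pi_bt Q f))\<^sup>2 \<le> 2 * ((cmod (inner_Rplus f (wave_packet (upper_tile Q))))\<^sup>2
      + (cmod (inner_Rplus f (wave_packet (lower_tile Q))))\<^sup>2)"
proof -
  define a where "a = inner_Rplus f (wave_packet (upper_tile Q))"
  define b where "b = inner_Rplus f (wave_packet (lower_tile Q))"
  define u where "u = wave_packet (upper_tile Q)"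
  define l where "l = wave_packet (lower_tile Q)"
  have Pi: "Pi_bt Q f x = a * complex_of_real (u x) + b * complex_of_real (l x)" for x
    unfolding Pi_bt_def a_def b_def u_def l_def by simp
  have "(L2_norm_Rplus (Pi_bt Q f))\<^sup>2 = integral\<^sup>L MP (\<lambda>x. (cmod (Pi_bt Q f x))\<^sup>2)"
    unfolding L2_norm_Rplus_def by (simp add: Bochner_Integration.integral_nonneg)
  also have "\<dots> \<le> integral\<^sup>L MP (\<lambda>x. 2 * (cmod a)\<^sup>2 * (u x * u x) + 2 * (cmod b)\<^sup>2 * (l x * l x))"
  proof (rule integral_mono')
    show "integrable MP (\<lambda>x. 2 * (cmod a)\<^sup>2 * (u x * u x) + 2 * (cmod b)\<^sup>2 * (l x * l x))"
      unfolding u_def l_def using wp_M_int(1) by simp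
    fix x
    show "0 \<le> 2 * (cmod a)\<^sup>2 * (u x * u x) + 2 * (cmod b)\<^sup>2 * (l x * l x)" by simp
    have "cmod (Pi_bt Q f x) \<le> cmod a * \<bar>u x\<bar> + cmod b * \<bar>l x\<bar>"
      unfolding Pi using norm_triangle_ineq[of "a * complex_of_real (u x)" "b * complex_of_real (l x)"]
      by (simp add: norm_mult)
    then have "(cmod (Pi_bt Q f x))\<^sup>2 \<le> (cmod a * \<bar>u x\<bar> + cmod b * \<bar>l x\<bar>)\<^sup>2"
      by (simp add: power_mono)
    also have "\<dots> \<le> 2 * (cmod a * \<bar>u x\<bar>)\<^sup>2 + 2 * (cmod b * \<bar>l x\<bar>)\<^sup>2" by (rule sq2)
    also have "\<dots> = 2 * (cmod a)\<^sup>2 * (u x * u x) + 2 * (cmod b)\<^sup>2 * (l x * l x)"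
      by (simp add: power2_eq_square abs_mult_self_eq algebra_simps)
    finally show "(cmod (Pi_bt Q f x))\<^sup>2 \<le> 2 * (cmod a)\<^sup>2 * (u x * u x) + 2 * (cmod b)\<^sup>2 * (l x * l x)" .
  qed
  also have "\<dots> = 2 * (cmod a)\<^sup>2 + 2 * (cmod b)\<^sup>2"
    unfolding u_def l_def using wp_M_int(1) W_norm1 by simp
  finally show ?thesis unfolding a_def b_def by simp
qed




lemma dint_eq: "dint (j, m) = {2 powi j * real m ..< 2 powi j * (real m + 1)}"
  by (simp add: dint_def)

lemma dint_le:
  assumes "dint (j, m) \<subseteq> dint (j', m')"
  shows "j \<le> j'" and "j = j' \<Longrightarrow> m = m'"
proof -
  have p: "(0::real) < 2 powi j" by simp
  have ne: "\<not> (2 powi j * (real m + 1) \<le> 2 powi j * real m)" using p by simp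
  from assms ne have h: "2 powi j' * real m' \<le> 2 powi j * real m" "2 powi j * (real m + 1) \<le> 2 powi j' * (real m' + 1)"
    unfolding dint_eq ivl_subset by auto
  show "j \<le> j'"
  proof (rule ccontr)
    assume "\<not> j \<le> j'"
    then have "(2::real) powi j' < 2 powi j" by (intro power_int_strict_increasing) auto
    then show False using h by (simp add: algebra_simps)
  qed
  assume "j = j'"
  then have "real m' \<le> real m" "real m + 1 \<le> real m' + 1" using h p by (simp_all add: mult_le_cancel_left_pos)
  then show "m = m'" by simp
qed

lemma dint_sub:
  assumes "j \<le> j'" "m div 2 ^ nat (j' - j) = m'"
  shows "dint (j, m) \<subseteq> dint (j', m')"
proof -
  define s where "s = nat (j' - j)"
  have j': "j' = j + int s" using assms(1) unfolding s_def by simp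
  have pj: "(2::real) powi j' = 2 powi j * 2 ^ s" unfolding j' by (subst power_int_add) auto
  have p: "(0::real) < 2 powi j" by simp
  have m1: "m' * 2^s \<le> m" using assms(2) unfolding s_def[symmetric]
    by (metis div_times_less_eq_dividend)
  have m2: "m < 2^s * Suc m'"
  proof -
    have r: "m mod 2^s < 2^s" by simp
    have q: "2^s * m' + m mod 2^s = m" using assms(2) div_mult_mod_eq[of m "2^s"]
      unfolding s_def[symmetric] by (simp add: mult.commute)
    have "2^s * Suc m' = 2^s * m' + 2^s" by simp
    then show ?thesis using r q by linarith
  qed
  have r1: "real m' * 2^s \<le> real m" using m1 by (metis of_nat_le_iff of_nat_mult of_nat_numeral of_nat_power)
  have "m + 1 \<le> 2^s * Suc m'" using m2 by simp
  then have "real (m + 1) \<le> real (2^s * Suc m')" by (simp only: of_nat_le_iff)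
  then have r2: "real m + 1 \<le> 2^s * (real m' + 1)" by (simp add: algebra_simps)
  have "2 powi j' * real m' \<le> 2 powi j * real m" unfolding pj using r1 p by (simp add: ac_simps)
  moreover have "2 powi j * (real m + 1) \<le> 2 powi j' * (real m' + 1)" unfolding pj using r2 p by (simp add: mult.assoc)
  ultimately show ?thesis unfolding dint_eq ivl_subset by simp
qed

lemma bt_le_refl: "bt_le P P" by (simp add: bt_le_def)
lemma bt_le_trans: "bt_le P Q \<Longrightarrow> bt_le Q R \<Longrightarrow> bt_le P R" by (auto simp: bt_le_def)

lemma bt_le_fst: "bt_le P Q \<Longrightarrow> fst P \<le> fst Q"
  by (cases P; cases Q) (auto simp: bt_le_def I_bt_def dest: dint_le(1))

lemma bt_le_eq: "bt_le P Q \<Longrightarrow> fst P = fst Q \<Longrightarrow> P = Q"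
proof (cases P; cases Q)
  fix j m n j' m' n'
  assume le: "bt_le P Q" and e: "fst P = fst Q" and P: "P = (j, m, n)" and Q: "Q = (j', m', n')"
  from le have a: "dint (j, m) \<subseteq> dint (j', m')" "dint (1 - j', n') \<subseteq> dint (1 - j, n)"
    by (auto simp: bt_le_def I_bt_def omega_bt_def P Q)
  have "j = j'" using e P Q by simp
  then show ?thesis using dint_le(2)[OF a(1)] dint_le(2)[OF a(2)] P Q by simp
qed

lemma max_above:
  assumes "finite S" "Q \<in> S"
  shows "\<exists>Q'\<in>S. bt_le Q Q' \<and> (\<forall>Q''\<in>S. bt_le Q' Q'' \<longrightarrow> Q'' = Q')"
proof -
  define A where "A = {Q'\<in>S. bt_le Q Q'}"
  have A: "finite A" "Q \<in> A" using assms by (auto simp: A_def bt_le_refl)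
  have "Max (fst ` A) \<in> fst ` A" using A by (intro Max_in) auto
  then obtain Q' where Q': "Q' \<in> A" "fst Q' = Max (fst ` A)" by auto
  show ?thesis
  proof (intro bexI conjI ballI impI)
    show "Q' \<in> S" "bt_le Q Q'" using Q' by (auto simp: A_def)
    fix Q'' assume "Q'' \<in> S" "bt_le Q' Q''"
    then have "Q'' \<in> A" using \<open>bt_le Q Q'\<close> by (auto simp: A_def intro: bt_le_trans)
    then have "fst Q'' \<le> fst Q'" using A Q' by simp
    moreover have "fst Q' \<le> fst Q''" using bt_le_fst[OF \<open>bt_le Q' Q''\<close>] .
    ultimately show "Q'' = Q'" using bt_le_eq[OF \<open>bt_le Q' Q''\<close>] by simp
  qed
qed

definition tlb :: "bitile \<Rightarrow> nat \<Rightarrow> tile" where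
  "tlb P c = (case P of (j, m, n) \<Rightarrow> (j, m, 2 * n + c))"

lemma upper_tl: "upper_tile P = tlb P 1" by (cases P) (simp add: upper_tile_def tlb_def)
lemma lower_tl: "lower_tile P = tlb P 0" by (cases P) (simp add: lower_tile_def tlb_def)

lemma tl_inj: "c1 \<le> 1 \<Longrightarrow> c2 \<le> 1 \<Longrightarrow> tlb Q1 c1 = tlb Q2 c2 \<Longrightarrow> Q1 = Q2 \<and> c1 = c2"
  by (cases Q1; cases Q2) (auto simp: tlb_def, presburger+)

lemma tl_orth_aux:
  assumes "fst Q1 \<le> fst Q2" "\<not> bt_le Q1 Q2" "c1 \<le> 1" "c2 \<le> 1"
  shows "integral\<^sup>L lborel (\<lambda>x. wave_packet (tlb Q1 c1) x * wave_packet (tlb Q2 c2) x) = 0"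
proof -
  obtain j1 m1 n1 where Q1: "Q1 = (j1, m1, n1)" by (cases Q1) auto
  obtain j2 m2 n2 where Q2: "Q2 = (j2, m2, n2)" by (cases Q2) auto
  define s where "s = nat (j2 - j1)"
  have jj: "j1 \<le> j2" using assms Q1 Q2 by simp
  have cond: "m1 div 2^s = m2 \<longrightarrow> (2 * n2 + c2) div 2^s \<noteq> 2 * n1 + c1"
  proof (intro impI notI)
    assume a: "m1 div 2^s = m2" "(2 * n2 + c2) div 2^s = 2 * n1 + c1"
    have e1: "(2 * n2 + c2) div 2^s div 2 = (2 * n2 + c2) div 2 div 2^s"
      by (metis div_mult2_eq mult.commute)
    have e2: "(2 * n2 + c2) div 2 = n2" using assms(4) by simp
    have e3: "(2 * n1 + c1) div 2 = n1" using assms(3) by simp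
    have nn: "n2 div 2^s = n1" using e1 e2 e3 a(2) by simp
    have I: "dint (j1, m1) \<subseteq> dint (j2, m2)" using dint_sub[OF jj, of m1 m2] a(1) unfolding s_def by simp
    have ss: "nat ((1 - j1) - (1 - j2)) = s" unfolding s_def by simp
    have O: "dint (1 - j2, n2) \<subseteq> dint (1 - j1, n1)" using dint_sub[of "1 - j2" "1 - j1" n2 n1] jj ss nn by simp
    have "bt_le Q1 Q2" using I O by (simp add: bt_le_def I_bt_def omega_bt_def Q1 Q2)
    then show False using assms(2) by simp
  qed
  show ?thesis unfolding Q1 Q2 tlb_def using wp_orth_gen[OF jj s_def cond] by simp
qed

lemma tl_orth:
  assumes "bt_le Q1 Q2 \<longrightarrow> Q1 = Q2" "bt_le Q2 Q1 \<longrightarrow> Q1 = Q2" "c1 \<le> 1" "c2 \<le> 1"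
  shows "integral\<^sup>L lborel (\<lambda>x. wave_packet (tlb Q1 c1) x * wave_packet (tlb Q2 c2) x)
     = (if tlb Q1 c1 = tlb Q2 c2 then 1 else 0)"
proof (cases "Q1 = Q2")
  case True
  obtain j m n where Q: "Q1 = (j, m, n)" by (cases Q1) auto
  show ?thesis unfolding True[symmetric] Q tlb_def using wp_same_orth[of j m "2 * n + c1" "2 * n + c2"] by simp
next
  case False
  then have ne: "tlb Q1 c1 \<noteq> tlb Q2 c2" using tl_inj assms(3,4) by blast
  have "integral\<^sup>L lborel (\<lambda>x. wave_packet (tlb Q1 c1) x * wave_packet (tlb Q2 c2) x) = 0"
  proof (cases "fst Q1 \<le> fst Q2")
    case True
    then show ?thesis using tl_orth_aux[OF True _ assms(3,4)] assms(1) False by blast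
  next
    case F2: False
    then have "fst Q2 \<le> fst Q1" by simp
    from tl_orth_aux[OF this _ assms(4,3)] assms(2) False
    have "integral\<^sup>L lborel (\<lambda>x. wave_packet (tlb Q2 c2) x * wave_packet (tlb Q1 c1) x) = 0" by blast
    then show ?thesis by (simp add: mult.commute)
  qed
  then show ?thesis using ne by simp
qed

lemma dyadic_countable: "countable {x. dyadic_rational x}"
proof -
  have "{x. dyadic_rational x} = (\<lambda>(k::int, j::nat). real_of_int k / 2 ^ j) ` UNIV"
    by (auto simp: dyadic_rational_def)
  then show ?thesis by simp
qed

lemma xi_exists: "\<exists>x. x \<in> dint D \<and> 0 \<le> x \<and> \<not> dyadic_rational x"
proof -
  obtain j n where D: "D = (j, n)" by (cases D) auto
  define a where "a = 2 powi j * real n"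
  define b where "b = 2 powi j * (real n + 1)"
  have ab: "a < b" unfolding a_def b_def by simp
  have a0: "0 \<le> a" unfolding a_def by simp
  have "uncountable {a..<b}" using ab by (simp add: uncountable_half_open_interval_1)
  then have "\<not> {a..<b} \<subseteq> {x. dyadic_rational x}" using dyadic_countable countable_subset by blast
  then obtain x where "x \<in> {a..<b}" "\<not> dyadic_rational x" by blast
  then show ?thesis using a0 by (intro exI[of _ x]) (auto simp: D dint_eq a_def[symmetric] b_def[symmetric])
qed




lemma main_lemma:
  fixes PP :: "bitile set" and f :: "real \<Rightarrow> complex"
  assumes fin: "finite PP" and cvx: "convex_bt PP" and fL2: "L2_Rplus f" and spos: "size_f f PP > 0"
  shows "\<exists>Phi Plo F. PP = Phi \<union> Plo \<and> Phi \<inter> Plo = {} \<and> convex_bt Phi \<and> convex_bt Plo \<and>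
     size_f f Plo \<le> size_f f PP / 2 \<and> is_convex_forest Phi F \<and>
     (\<Sum>(T, IT, xi)\<in>F. dlen IT) \<le> 8 * (size_f f PP) powr (-2) * (L2_norm_Rplus f)\<^sup>2"
proof -
  define ratio where "ratio = (\<lambda>P. L2_norm_Rplus (Pi_bt P f) / sqrt (dlen (I_bt P)))"
  have sz: "\<And>X. size_f f X = Sup (insert 0 (ratio ` X))" by (simp add: size_f_def ratio_def)
  define s where "s = size_f f PP"
  have s0: "s > 0" using spos s_def by simp
  define S where "S = {P\<in>PP. ratio P > s/2}"
  define Mx where "Mx = {Q\<in>S. \<forall>Q'\<in>S. bt_le Q Q' \<longrightarrow> Q' = Q}"
  define Phi where "Phi = {P\<in>PP. \<exists>Q\<in>Mx. bt_le P Q}"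
  define Plo where "Plo = PP - Phi"
  define T where "T Q = {P\<in>PP. bt_le P Q \<and> (\<forall>Q'\<in>Mx. bt_le P Q' \<longrightarrow> to_nat Q \<le> to_nat Q')}" for Q
  define xi where "xi Q = (SOME x. x \<in> dint (omega_bt Q) \<and> 0 \<le> x \<and> \<not> dyadic_rational x)" for Q
  define F where "F = (\<lambda>Q. (T Q, I_bt Q, xi Q)) ` Mx"
  have SPP: "S \<subseteq> PP" unfolding S_def by auto
  have MS: "Mx \<subseteq> S" unfolding Mx_def by auto
  have finS: "finite S" using fin SPP finite_subset by blast
  have finM: "finite Mx" using finS MS finite_subset by blast
  have xi: "xi Q \<in> dint (omega_bt Q) \<and> 0 \<le> xi Q \<and> \<not> dyadic_rational (xi Q)" for Q
    unfolding xi_def by (rule someI_ex[OF xi_exists])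
  have S_Phi: "P \<in> Phi" if "P \<in> S" for P
  proof -
    from max_above[OF finS that] obtain Q' where "Q' \<in> S" "bt_le P Q'" "\<forall>Q''\<in>S. bt_le Q' Q'' \<longrightarrow> Q'' = Q'"
      by blast
    then have "Q' \<in> Mx" unfolding Mx_def by auto
    then show ?thesis using \<open>bt_le P Q'\<close> that SPP unfolding Phi_def by auto
  qed
  have incomp: "bt_le Q1 Q2 \<longrightarrow> Q1 = Q2" if "Q1 \<in> Mx" "Q2 \<in> Mx" for Q1 Q2
    using that MS unfolding Mx_def by auto
  have part1: "PP = Phi \<union> Plo" "Phi \<inter> Plo = {}" unfolding Plo_def Phi_def by auto
  have cPhi: "convex_bt Phi"
    unfolding convex_bt_def
  proof (intro ballI allI impI)
    fix P P'' P' assume a: "P \<in> Phi" "P'' \<in> Phi" "bt_le P P' \<and> bt_le P' P''"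
    then have "P' \<in> PP" using cvx unfolding convex_bt_def Phi_def by blast
    moreover obtain Q where "Q \<in> Mx" "bt_le P'' Q" using a unfolding Phi_def by auto
    ultimately show "P' \<in> Phi" using a bt_le_trans unfolding Phi_def by blast
  qed
  have cPlo: "convex_bt Plo"
    unfolding convex_bt_def
  proof (intro ballI allI impI)
    fix P P'' P' assume a: "P \<in> Plo" "P'' \<in> Plo" "bt_le P P' \<and> bt_le P' P''"
    then have "P' \<in> PP" using cvx unfolding convex_bt_def Plo_def by blast
    moreover have "P' \<notin> Phi"
    proof
      assume "P' \<in> Phi"
      then obtain Q where "Q \<in> Mx" "bt_le P' Q" unfolding Phi_def by auto
      then have "P \<in> Phi" using a bt_le_trans unfolding Phi_def Plo_def by blast
      then show False using a unfolding Plo_def by auto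
    qed
    ultimately show "P' \<in> Plo" unfolding Plo_def by auto
  qed
  have size_lo: "size_f f Plo \<le> s / 2"
    unfolding sz
  proof (rule cSup_least)
    show "insert 0 (ratio ` Plo) \<noteq> {}" by simp
    fix x assume "x \<in> insert 0 (ratio ` Plo)"
    then show "x \<le> s / 2"
    proof
      assume "x = 0" then show ?thesis using s0 by simp
    next
      assume "x \<in> ratio ` Plo"
      then obtain P where P: "P \<in> Plo" "x = ratio P" by auto
      then have "P \<notin> S" using S_Phi unfolding Plo_def by blast
      then show ?thesis using P unfolding S_def Plo_def by auto
    qed
  qed
  have T_sub: "T Q \<subseteq> Phi" if "Q \<in> Mx" for Q using that unfolding T_def Phi_def by auto
  have T_convex: "convex_bt (T Q)" for Q
    unfolding convex_bt_def
  proof (intro ballI allI impI)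
    fix P P'' P' assume a: "P \<in> T Q" "P'' \<in> T Q" "bt_le P P' \<and> bt_le P' P''"
    then have "P' \<in> PP" using cvx unfolding convex_bt_def T_def by blast
    moreover have "bt_le P' Q" using a bt_le_trans unfolding T_def by blast
    moreover have "\<forall>Q'\<in>Mx. bt_le P' Q' \<longrightarrow> to_nat Q \<le> to_nat Q'"
      using a bt_le_trans unfolding T_def by blast
    ultimately show "P' \<in> T Q" unfolding T_def by blast
  qed
  have T_tree: "is_tree (T Q) (I_bt Q) (xi Q)" for Q
    unfolding is_tree_def
  proof (intro conjI ballI)
    show "0 \<le> xi Q" "\<not> dyadic_rational (xi Q)" using xi by auto
    fix P assume "P \<in> T Q"
    then have "bt_le P Q" unfolding T_def by auto
    then show "dint (I_bt P) \<subseteq> dint (I_bt Q)" "xi Q \<in> dint (omega_bt P)"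
      using xi[of Q] unfolding bt_le_def by auto
  qed
  have T_disj: "T Q1 \<inter> T Q2 = {}" if "Q1 \<in> Mx" "Q2 \<in> Mx" "Q1 \<noteq> Q2" for Q1 Q2
  proof (rule ccontr)
    assume "T Q1 \<inter> T Q2 \<noteq> {}"
    then obtain P where "P \<in> T Q1" "P \<in> T Q2" by auto
    then have "to_nat Q1 \<le> to_nat Q2" "to_nat Q2 \<le> to_nat Q1" using that unfolding T_def by auto
    then have "to_nat Q1 = to_nat Q2" by simp
    then show False using that by simp
  qed
  have T_cover: "Phi \<subseteq> (\<Union>Q\<in>Mx. T Q)"
  proof
    fix P assume P: "P \<in> Phi"
    define cand where "cand = {Q\<in>Mx. bt_le P Q}"
    have cf: "finite cand" "cand \<noteq> {}" using finM P unfolding cand_def Phi_def by auto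
    have "Min (to_nat ` cand) \<in> to_nat ` cand" using cf by (intro Min_in) auto
    then obtain Q where Q: "Q \<in> cand" "to_nat Q = Min (to_nat ` cand)" by auto
    have "P \<in> T Q"
      unfolding T_def using P Q cf unfolding cand_def Phi_def by auto
    then show "P \<in> (\<Union>Q\<in>Mx. T Q)" using Q unfolding cand_def by auto
  qed
  have forest: "is_convex_forest Phi F"
    unfolding is_convex_forest_def is_forest_def
  proof (intro conjI)
    show "finite Phi" using fin unfolding Phi_def by simp
    show "finite F" using finM unfolding F_def by simp
    show "\<forall>(T, IT, xi)\<in>F. is_tree T IT xi \<and> convex_bt T"
      unfolding F_def using T_tree T_convex by auto
    show "\<forall>A\<in>F. \<forall>B\<in>F. A \<noteq> B \<longrightarrow> fst A \<inter> fst B = {}"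
    proof (intro ballI impI)
      fix A B assume AB: "A \<in> F" "B \<in> F" "A \<noteq> B"
      obtain Q1 where Q1: "Q1 \<in> Mx" "A = (T Q1, I_bt Q1, xi Q1)" using AB(1) unfolding F_def by auto
      obtain Q2 where Q2: "Q2 \<in> Mx" "B = (T Q2, I_bt Q2, xi Q2)" using AB(2) unfolding F_def by auto
      have "Q1 \<noteq> Q2" using AB(3) Q1 Q2 by auto
      then show "fst A \<inter> fst B = {}" using T_disj[OF Q1(1) Q2(1)] Q1 Q2 by simp
    qed
    show "Phi = (\<Union>A\<in>F. fst A)"
    proof -
      have e: "(\<Union>A\<in>F. fst A) = (\<Union>Q\<in>Mx. T Q)" unfolding F_def by auto
      show ?thesis unfolding e using T_cover T_sub by blast
    qed
    show "convex_bt Phi" by (rule cPhi)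
  qed
  define a where "a p = inner_Rplus f (wave_packet p)" for p
  have sum1: "(\<Sum>(T, IT, xi)\<in>F. dlen IT) \<le> (\<Sum>Q\<in>Mx. dlen (I_bt Q))"
  proof -
    have "(\<Sum>(T, IT, xi)\<in>F. dlen IT) \<le> (\<Sum>Q\<in>Mx. ((\<lambda>(T, IT, xi). dlen IT) \<circ> (\<lambda>Q. (T Q, I_bt Q, xi Q))) Q)"
      unfolding F_def by (rule sum_image_le[OF finM]) (simp add: dlen_def)
    then show ?thesis by simp
  qed
  have dbound: "dlen (I_bt Q) \<le> 8 / s\<^sup>2 * ((cmod (a (tlb Q 0)))\<^sup>2 + (cmod (a (tlb Q 1)))\<^sup>2)" if "Q \<in> Mx" for Q
  proof -
    define d where "d = dlen (I_bt Q)"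
    define L where "L = L2_norm_Rplus (Pi_bt Q f)"
    have d0: "d > 0" unfolding d_def dlen_def by simp
    have "ratio Q > s/2" using that MS unfolding S_def by auto
    then have "L / sqrt d > s / 2" unfolding ratio_def L_def d_def by simp
    then have "s / 2 * sqrt d < L" using d0 by (simp add: less_divide_eq)
    then have "(s / 2 * sqrt d)\<^sup>2 < L\<^sup>2" using s0 d0 by (intro power_strict_mono) auto
    then have "s\<^sup>2 / 4 * d < L\<^sup>2" using d0 by (simp add: power_mult_distrib power_divide)
    then have "d < 4 * L\<^sup>2 / s\<^sup>2" using s0 by (simp add: field_simps)
    moreover have "L\<^sup>2 \<le> 2 * ((cmod (a (tlb Q 1)))\<^sup>2 + (cmod (a (tlb Q 0)))\<^sup>2)"
      using Pi_bound[of Q f] unfolding L_def a_def upper_tl lower_tl .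
    ultimately have "d \<le> 4 * (2 * ((cmod (a (tlb Q 1)))\<^sup>2 + (cmod (a (tlb Q 0)))\<^sup>2)) / s\<^sup>2"
      using s0 by (smt (verit) divide_right_mono mult_left_mono zero_le_power2)
    then show ?thesis unfolding d_def by (simp add: field_simps)
  qed
  define K where "K = (\<lambda>(Q, c). tlb Q c) ` (Mx \<times> {0, 1})"
  have injK: "inj_on (\<lambda>(Q, c). tlb Q c) (Mx \<times> {0, 1})"
  proof (rule inj_onI)
    fix x y assume xy: "x \<in> Mx \<times> {0, 1}" "y \<in> Mx \<times> {0::nat, 1}" "(case x of (Q, c) \<Rightarrow> tlb Q c) = (case y of (Q, c) \<Rightarrow> tlb Q c)"
    obtain Q c where x: "x = (Q, c)" "c \<le> 1" using xy(1) by auto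
    obtain Q' c' where y: "y = (Q', c')" "c' \<le> 1" using xy(2) by auto
    have "tlb Q c = tlb Q' c'" using xy(3) x y by simp
    then show "x = y" using tl_inj[OF x(2) y(2)] x y by simp
  qed
  have finK: "finite K" unfolding K_def using finM by simp
  have orthK: "integral\<^sup>L lborel (\<lambda>x. wave_packet p x * wave_packet q x) = (if p = q then 1 else 0)"
    if pK: "p \<in> K" and qK: "q \<in> K" for p q
  proof -
    from pK obtain x where x: "x \<in> Mx \<times> {0, 1}" "p = (case x of (Q, c) \<Rightarrow> tlb Q c)" unfolding K_def by (rule imageE)
    obtain Q1 c1 where xx: "x = (Q1, c1)" by (cases x)
    have 1: "Q1 \<in> Mx" "c1 \<in> {0, 1}" "p = tlb Q1 c1" using x xx by auto
    from qK obtain y where y: "y \<in> Mx \<times> {0, 1}" "q = (case y of (Q, c) \<Rightarrow> tlb Q c)" unfolding K_def by (rule imageE)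
    obtain Q2 c2 where yy: "y = (Q2, c2)" by (cases y)
    have 2: "Q2 \<in> Mx" "c2 \<in> {0, 1}" "q = tlb Q2 c2" using y yy by auto
    have c: "c1 \<le> 1" "c2 \<le> 1" using 1(2) 2(2) by auto
    have i2: "bt_le Q2 Q1 \<longrightarrow> Q1 = Q2" using incomp[OF 2(1) 1(1)] by auto
    show ?thesis unfolding 1(3) 2(3) by (rule tl_orth[OF incomp[OF 1(1) 2(1)] i2 c])
  qed
  have sumK: "(\<Sum>Q\<in>Mx. (cmod (a (tlb Q 0)))\<^sup>2 + (cmod (a (tlb Q 1)))\<^sup>2) \<le> (L2_norm_Rplus f)\<^sup>2"
  proof -
    have "(\<Sum>p\<in>K. (cmod (a p))\<^sup>2) = (\<Sum>x\<in>Mx \<times> {0, 1}. (cmod (a (case x of (Q, c) \<Rightarrow> tlb Q c)))\<^sup>2)"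
      unfolding K_def by (subst sum.reindex[OF injK]) (simp add: comp_def)
    also have "\<dots> = (\<Sum>Q\<in>Mx. \<Sum>c\<in>{0::nat, 1}. (cmod (a (tlb Q c)))\<^sup>2)"
      unfolding sum.cartesian_product by (rule sum.cong) auto
    also have "\<dots> = (\<Sum>Q\<in>Mx. (cmod (a (tlb Q 0)))\<^sup>2 + (cmod (a (tlb Q 1)))\<^sup>2)" by simp
    finally have e: "(\<Sum>p\<in>K. (cmod (a p))\<^sup>2) = (\<Sum>Q\<in>Mx. (cmod (a (tlb Q 0)))\<^sup>2 + (cmod (a (tlb Q 1)))\<^sup>2)" .
    have "(\<Sum>p\<in>K. (cmod (a p))\<^sup>2) \<le> (L2_norm_Rplus f)\<^sup>2"
      using bessel_f[OF fL2 finK orthK] unfolding a_def .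
    then show ?thesis unfolding e .
  qed
  have "(\<Sum>(T, IT, xi)\<in>F. dlen IT) \<le> (\<Sum>Q\<in>Mx. 8 / s\<^sup>2 * ((cmod (a (tlb Q 0)))\<^sup>2 + (cmod (a (tlb Q 1)))\<^sup>2))"
  proof -
    have "(\<Sum>Q\<in>Mx. dlen (I_bt Q)) \<le> (\<Sum>Q\<in>Mx. 8 / s\<^sup>2 * ((cmod (a (tlb Q 0)))\<^sup>2 + (cmod (a (tlb Q 1)))\<^sup>2))"
      by (rule sum_mono) (rule dbound)
    then show ?thesis using sum1 by linarith
  qed
  also have "\<dots> = 8 / s\<^sup>2 * (\<Sum>Q\<in>Mx. (cmod (a (tlb Q 0)))\<^sup>2 + (cmod (a (tlb Q 1)))\<^sup>2)"
    by (simp add: sum_distrib_left)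
  also have "\<dots> \<le> 8 / s\<^sup>2 * (L2_norm_Rplus f)\<^sup>2"
    using sumK s0 by (intro mult_left_mono) auto
  also have "\<dots> = 8 * s powr (-2) * (L2_norm_Rplus f)\<^sup>2"
    using s0 by (simp add: powr_minus divide_inverse)
  finally have bound: "(\<Sum>(T, IT, xi)\<in>F. dlen IT) \<le> 8 * s powr (-2) * (L2_norm_Rplus f)\<^sup>2" .
  show ?thesis
    using part1 cPhi cPlo size_lo forest bound unfolding s_def by blast
qed


theorem lemma4p3:
  "\<exists>C::real. C > 0 \<and>
     (\<forall>(\<PP>::bitile set) (f::real \<Rightarrow> complex).
        finite \<PP> \<and> convex_bt \<PP> \<and> L2_Rplus f \<and> size_f f \<PP> > 0 \<longrightarrow>
        (\<exists>Phi Plo F.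
           \<PP> = Phi \<union> Plo \<and> Phi \<inter> Plo = {} \<and>
           convex_bt Phi \<and> convex_bt Plo \<and>
           size_f f Plo \<le> size_f f \<PP> / 2 \<and>
           is_convex_forest Phi F \<and>
           (\<Sum>(T, IT, xi)\<in>F. dlen IT) \<le> C * (size_f f \<PP>) powr (-2) * (L2_norm_Rplus f)\<^sup>2))"
proof (intro exI[of _ 8] conjI allI impI)
  show "(8::real) > 0" by simp
  fix PP :: "bitile set" and f :: "real \<Rightarrow> complex"
  assume "finite PP \<and> convex_bt PP \<and> L2_Rplus f \<and> size_f f PP > 0"
  then show "\<exists>Phi Plo F.
           PP = Phi \<union> Plo \<and> Phi \<inter> Plo = {} \<and>
           convex_bt Phi \<and> convex_bt Plo \<and>
           size_f f Plo \<le> size_f f PP / 2 \<and>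
           is_convex_forest Phi F \<and>
           (\<Sum>(T, IT, xi)\<in>F. dlen IT) \<le> 8 * (size_f f PP) powr (-2) * (L2_norm_Rplus f)\<^sup>2"
    using main_lemma[of PP f] by blast
qed

end
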